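(* For every $\alpha>0$ there exists $\ell_0$ such that for every integer $\ell\ge\ell_0$ and every digraph $D$ on $n$ vertices the following holds. There exist vertices $v_1, \dots, v_t \in V(D)$ and sets $V_1, \dots, V_t \subseteq V(D)$ such that (a) for every $j$ and every $u \in V_j$ there is a directed path from $u$ to $v_j$ of length at most $\ell$, (b) the sets $V_1, \dots, V_t$ partition $V(D)$, and (c) $|V_j| \geq \delta^+(D) - \alpha n$ for each $j$.
   Context: A digraph $D$ has a vertex set and a set of ordered pairs of vertices (edges), loops allowed, no multiple copies of an ordered pair. The outdegree of $v$ is the number of $w$ with $(v,w)\in E(D)$, and $\delta^+(D)$ is the minimum outdegree over all vertices. *)

theory Defs
  imports Complex_Main
begin

definition digraph :: "'a set \<Rightarrow> ('a \<times> 'a) set \<Rightarrow> bool" where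
  "digraph V E \<longleftrightarrow> finite V \<and> E \<subseteq> V \<times> V"

definition outdeg :: "('a \<times> 'a) set \<Rightarrow> 'a \<Rightarrow> nat" where
  "outdeg E v = card {w. (v, w) \<in> E}"

text \<open>Minimum outdegree (meaningful for nonempty V).\<close>
definition min_outdeg :: "'a set \<Rightarrow> ('a \<times> 'a) set \<Rightarrow> nat" where
  "min_outdeg V E = Min (outdeg E ` V)"

definition has_dpath_le :: "'a set \<Rightarrow> ('a \<times> 'a) set \<Rightarrow> nat \<Rightarrow> 'a \<Rightarrow> 'a \<Rightarrow> bool" where
  "has_dpath_le V E l u v \<longleftrightarrow>
     (\<exists>ps. ps \<noteq> [] \<and> distinct ps \<and> set ps \<subseteq> V \<and> hd ps = u \<and> last ps = v \<and>
          (\<forall>i. Suc i < length ps \<longrightarrow> (ps ! i, ps ! Suc i) \<in> E) \<and>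
          length ps - 1 \<le> l)"

end

theory Submission
  imports Defs
begin

inductive reach :: "'a set \<Rightarrow> ('a \<times> 'a) set \<Rightarrow> nat \<Rightarrow> 'a \<Rightarrow> 'a \<Rightarrow> bool" for V E where
  r0: "u \<in> V \<Longrightarrow> reach V E k u u"
| rs: "(u,x) \<in> E \<Longrightarrow> u \<in> V \<Longrightarrow> reach V E k x v \<Longrightarrow> reach V E (Suc k) u v"

lemma reach_mono: "reach V E k u v \<Longrightarrow> k \<le> k' \<Longrightarrow> reach V E k' u v"
proof (induction arbitrary: k' rule: reach.induct)
  case (r0 u k) thus ?case by (simp add: reach.r0)
next
  case (rs u x k v)
  then obtain k'' where "k' = Suc k''" "k \<le> k''" by (cases k') auto
  thus ?case using rs by (auto intro: reach.rs)
qed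

lemma reach_trans: "reach V E k u a \<Longrightarrow> reach V E m a v \<Longrightarrow> reach V E (k+m) u v"
proof (induction rule: reach.induct)
  case (r0 u k) show ?case by (rule reach_mono[OF r0.prems]) simp
next
  case (rs u x k v) thus ?case by (auto intro: reach.rs)
qed

lemma reach_imp_path: "reach V E k u v \<Longrightarrow> has_dpath_le V E k u v"
proof (induction rule: reach.induct)
  case (r0 u k)
  show ?case unfolding has_dpath_le_def by (rule exI[of _ "[u]"]) (use r0 in auto)
next
  case (rs u x k v)
  from rs.IH obtain ps where ps: "ps \<noteq> []" "distinct ps" "set ps \<subseteq> V" "hd ps = x" "last ps = v"
     "\<forall>i. Suc i < length ps \<longrightarrow> (ps ! i, ps ! Suc i) \<in> E" "length ps - 1 \<le> k"
    unfolding has_dpath_le_def by blast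
  show ?case
  proof (cases "u \<in> set ps")
    case True
    then obtain i where i: "i < length ps" "ps ! i = u" by (auto simp: in_set_conv_nth)
    let ?qs = "drop i ps"
    have "?qs \<noteq> []" using i by simp
    moreover have "distinct ?qs" using ps(2) by simp
    moreover have "set ?qs \<subseteq> V" using set_drop_subset[of i ps] ps(3) by (rule subset_trans)
    moreover have "hd ?qs = u" using i by (simp add: hd_drop_conv_nth)
    moreover have "last ?qs = v" using i ps(5) by simp
    moreover have "\<forall>j. Suc j < length ?qs \<longrightarrow> (?qs ! j, ?qs ! Suc j) \<in> E"
    proof (intro allI impI)
      fix j assume j: "Suc j < length ?qs"
      hence "Suc (i+j) < length ps" by simp
      hence "(ps ! (i+j), ps ! Suc (i+j)) \<in> E" using ps(6) by blast
      thus "(?qs ! j, ?qs ! Suc j) \<in> E" using i by simp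
    qed
    moreover have "length ?qs - 1 \<le> Suc k" using ps(7) by simp
    ultimately show ?thesis unfolding has_dpath_le_def by blast
  next
    case False
    let ?qs = "u # ps"
    have "\<forall>j. Suc j < length ?qs \<longrightarrow> (?qs ! j, ?qs ! Suc j) \<in> E"
    proof (intro allI impI)
      fix j assume j: "Suc j < length ?qs"
      show "(?qs ! j, ?qs ! Suc j) \<in> E"
      proof (cases j)
        case 0
        have "ps ! 0 = x" using ps(1,4) hd_conv_nth by metis
        thus ?thesis using 0 rs.hyps(1) by simp
      next
        case (Suc j') thus ?thesis using j ps(6) by simp
      qed
    qed
    moreover have "length ?qs - 1 \<le> Suc k" using ps(1,7) by (cases ps) auto
    moreover have "?qs \<noteq> []" by simp
    moreover have "distinct ?qs" using ps(2) False by simp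
    moreover have "set ?qs \<subseteq> V" using ps(3) rs.hyps(2) by simp
    moreover have "hd ?qs = u" by simp
    moreover have "last ?qs = v" using ps(1,5) by simp
    ultimately show ?thesis unfolding has_dpath_le_def by blast
  qed
qed

lemma partition_from_f:
  fixes \<theta> :: real
  assumes fV: "\<forall>u\<in>V. f u \<in> V \<and> reach V E l u (f u)"
    and fib: "\<forall>w\<in>f`V. real (card {u\<in>V. f u = w}) \<ge> \<theta>"
    and fin: "finite V"
  shows "\<exists>(t::nat) (v::nat \<Rightarrow> 'a) (Vs::nat \<Rightarrow> 'a set).
              (\<forall>j<t. v j \<in> V) \<and>
              (\<forall>j<t. \<forall>u\<in>Vs j. has_dpath_le V E l u (v j)) \<and>
              (\<forall>j<t. Vs j \<noteq> {} \<and> Vs j \<subseteq> V) \<and>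
              (\<forall>i<t. \<forall>j<t. i \<noteq> j \<longrightarrow> Vs i \<inter> Vs j = {}) \<and>
              (\<Union>j<t. Vs j) = V \<and>
              (\<forall>j<t. real (card (Vs j)) \<ge> \<theta>)"
proof -
  let ?W = "f ` V"
  have "finite ?W" using fin by simp
  then obtain h where h: "bij_betw h {0..<card ?W} ?W" using ex_bij_betw_nat_finite by blast
  have hW: "\<And>j. j < card ?W \<Longrightarrow> h j \<in> ?W" using h by (auto simp: bij_betw_def)
  have hinj: "\<And>i j. i < card ?W \<Longrightarrow> j < card ?W \<Longrightarrow> h i = h j \<Longrightarrow> i = j"
    using h by (auto simp: bij_betw_def inj_on_def)
  have hsurj: "\<exists>j<card ?W. h j = w" if w: "w \<in> ?W" for w
  proof -
    have "w \<in> h ` {0..<card ?W}" using h w by (simp add: bij_betw_def)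
    then obtain j where "j \<in> {0..<card ?W}" "h j = w" by blast
    thus ?thesis by auto
  qed
  show ?thesis
  proof (intro exI[of _ "card ?W"] exI[of _ h] exI[of _ "\<lambda>j. {u\<in>V. f u = h j}"] conjI allI impI)
    fix j assume j: "j < card ?W"
    show "h j \<in> V" using hW[OF j] fV by auto
    show "\<forall>u\<in>{u\<in>V. f u = h j}. has_dpath_le V E l u (h j)"
    proof
      fix u assume "u \<in> {u\<in>V. f u = h j}"
      hence "u \<in> V" "f u = h j" by auto
      thus "has_dpath_le V E l u (h j)" using fV reach_imp_path by metis
    qed
    show "{u\<in>V. f u = h j} \<noteq> {}" using hW[OF j] by auto
    show "{u\<in>V. f u = h j} \<subseteq> V" by auto
    show "real (card {u\<in>V. f u = h j}) \<ge> \<theta>" using fib hW[OF j] by auto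
  next
    fix i j assume "i < card ?W" "j < card ?W" "i \<noteq> j"
    thus "{u\<in>V. f u = h i} \<inter> {u\<in>V. f u = h j} = {}" using hinj by auto
  next
    show "(\<Union>j<card ?W. {u\<in>V. f u = h j}) = V"
    proof
      show "V \<subseteq> (\<Union>j<card ?W. {u\<in>V. f u = h j})"
      proof
        fix u assume "u \<in> V"
        then obtain j where "j < card ?W" "h j = f u" using hsurj by blast
        thus "u \<in> (\<Union>j<card ?W. {u\<in>V. f u = h j})" using \<open>u\<in>V\<close> by (metis (mono_tags, lifting) UN_iff lessThan_iff mem_Collect_eq)
      qed
    qed auto
  qed
qed

lemma card_filter_sum: "finite A \<Longrightarrow> card {x\<in>A. P x} = (\<Sum>x\<in>A. if P x then 1 else (0::nat))"
  by (simp add: sum.If_cases Int_def conj_commute)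

lemma main_case:
  fixes \<alpha> :: real and V :: "'a set"
  assumes dg: "digraph V E" and a: "\<alpha> > 0" and Vne: "V \<noteq> {}"
    and pos: "real (min_outdeg V E) - \<alpha> * real (card V) > 0"
    and K: "real K * \<alpha> > 1"
  shows "\<exists>f. (\<forall>u\<in>V. f u \<in> V \<and> reach V E (K+2) u (f u)) \<and>
             (\<forall>w\<in>f`V. real (card {u\<in>V. f u = w}) \<ge> real (min_outdeg V E) - \<alpha> * real (card V))"
proof -
  define d where "d = min_outdeg V E"
  define n where "n = card V"
  define \<theta> where "\<theta> = real d - \<alpha> * real n"
  have fin: "finite V" and EV: "E \<subseteq> V \<times> V" using dg by (auto simp: digraph_def)
  have npos: "n > 0" using fin Vne n_def by (simp add: card_gt_0_iff)
  have thpos: "\<theta> > 0" using pos by (simp add: \<theta>_def d_def n_def)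
  have dpos: "real d > \<alpha> * real n" using thpos \<theta>_def by simp
  have deg: "\<And>u. u \<in> V \<Longrightarrow> outdeg E u \<ge> d"
    unfolding d_def min_outdeg_def using fin by (simp add: Min_le)
  have outfin: "\<And>u. finite {w. (u,w) \<in> E}"
    using fin EV by (metis (no_types, lifting) finite_subset mem_Collect_eq mem_Sigma_iff subsetD subsetI)
  define N where "N w = {u. (u,w) \<in> E}" for w
  have NV: "\<And>w. N w \<subseteq> V" using EV N_def by auto
  have Nfin: "\<And>w. finite (N w)" using NV fin finite_subset by blast
  define valid where "valid A g \<longleftrightarrow> A \<subseteq> V \<and> (\<forall>a\<in>A. (a, g a) \<in> E) \<and>
      (\<forall>w\<in>g`A. real (card {a\<in>A. g a = w}) \<ge> \<theta>)" for A g
  have "\<exists>A. (\<exists>g. valid A g) \<and> (\<forall>B. (\<exists>h. valid B h) \<longrightarrow> card B \<le> card A)"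
  proof (rule Lattices_Big.ex_has_greatest_nat[where k = "{}" and b = "Suc (card V)"])
    show "\<exists>g. valid {} g" by (simp add: valid_def)
    show "\<forall>y. (\<exists>g. valid y g) \<longrightarrow> card y < Suc (card V)"
      using fin by (auto simp: valid_def intro: card_mono le_imp_less_Suc)
  qed
  then obtain A g where vAg: "valid A g" and maxA: "\<And>B h. valid B h \<Longrightarrow> card B \<le> card A"
    by blast
  have AV: "A \<subseteq> V" and Ag: "\<And>a. a \<in> A \<Longrightarrow> (a, g a) \<in> E"
    and Afib: "\<And>w. w \<in> g`A \<Longrightarrow> real (card {a\<in>A. g a = w}) \<ge> \<theta>"
    using vAg by (auto simp: valid_def)
  have Afin: "finite A" using AV fin finite_subset by blast
  have small: "real (card (N w - A)) < \<theta>" for w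
  proof (rule ccontr)
    assume "\<not> real (card (N w - A)) < \<theta>"
    hence big: "real (card (N w - A)) \<ge> \<theta>" by simp
    have ne: "N w - A \<noteq> {}"
    proof
      assume "N w - A = {}" with big thpos show False by simp
    qed
    define B where "B = A \<union> (N w - A)"
    define h where "h x = (if x \<in> A then g x else w)" for x
    have "valid B h"
      unfolding valid_def
    proof (intro conjI ballI)
      show "B \<subseteq> V" using AV NV B_def by auto
    next
      fix b assume "b \<in> B" thus "(b, h b) \<in> E" using Ag by (auto simp: B_def h_def N_def)
    next
      fix y assume y: "y \<in> h ` B"
      have finB: "finite B" using Afin Nfin B_def by auto
      show "real (card {b\<in>B. h b = y}) \<ge> \<theta>"
      proof (cases "y = w")
        case True
        have "N w - A \<subseteq> {b\<in>B. h b = y}" using True by (auto simp: B_def h_def)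
        hence "card (N w - A) \<le> card {b\<in>B. h b = y}" using finB by (intro card_mono) auto
        thus ?thesis using big by linarith
      next
        case False
        then obtain x where x: "x \<in> A" "y = g x" using y by (auto simp: h_def split: if_splits)
        have "{a\<in>A. g a = y} \<subseteq> {b\<in>B. h b = y}" by (auto simp: B_def h_def)
        hence "card {a\<in>A. g a = y} \<le> card {b\<in>B. h b = y}" using finB by (intro card_mono) auto
        moreover have "real (card {a\<in>A. g a = y}) \<ge> \<theta>" using Afib x by auto
        ultimately show ?thesis by linarith
      qed
    qed
    hence "card B \<le> card A" by (rule maxA)
    moreover have "A \<subset> B" using ne B_def by auto
    moreover have "finite B" using Afin Nfin B_def by auto
    ultimately have "card A < card B" by (simp add: psubset_card_mono)
    with \<open>card B \<le> card A\<close> show False by simp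
  qed
  define S where "S k = {u\<in>V. \<not> (\<exists>a\<in>A. reach V E k u a)}" for k
  have Sfin: "finite (S k)" for k unfolding S_def using fin by simp
  have Ssub: "S (Suc k) \<subseteq> S k" for k
  proof
    fix u assume "u \<in> S (Suc k)"
    hence u: "u \<in> V" "\<forall>a\<in>A. \<not> reach V E (Suc k) u a" unfolding S_def by auto
    have "\<forall>a\<in>A. \<not> reach V E k u a"
    proof (intro ballI notI)
      fix a assume "a \<in> A" "reach V E k u a"
      hence "reach V E (Suc k) u a" using reach_mono by (metis le_SucI order_refl)
      thus False using u \<open>a \<in> A\<close> by blast
    qed
    thus "u \<in> S k" using u(1) unfolding S_def by blast
  qed
  have Sout: "x \<in> S k" if "u \<in> S (Suc k)" "(u,x) \<in> E" for u x k
  proof -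
    have "x \<in> V" using that EV by auto
    moreover have "\<not> (\<exists>a\<in>A. reach V E k x a)"
    proof
      assume "\<exists>a\<in>A. reach V E k x a"
      then obtain a where "a \<in> A" "reach V E k x a" by blast
      hence "reach V E (Suc k) u a" using that by (auto simp: S_def intro: reach.rs)
      thus False using that \<open>a \<in> A\<close> by (auto simp: S_def)
    qed
    ultimately show ?thesis by (simp add: S_def)
  qed
  have SA: "S k \<inter> A = {}" for k using AV by (auto simp: S_def intro: reach.r0)
  have SV: "S k \<subseteq> V" for k by (auto simp: S_def)
  have count: "real d * real (card (S (Suc k))) \<le> real (card (S k)) * \<theta>" for k
  proof -
    let ?S1 = "S (Suc k)" and ?S0 = "S k"
    have "d * card ?S1 \<le> (\<Sum>u\<in>?S1. outdeg E u)"
      using sum_bounded_below[of ?S1 d "outdeg E"] deg SV by (auto simp: mult.commute)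
    also have "\<dots> = (\<Sum>u\<in>?S1. \<Sum>w\<in>?S0. if (u,w) \<in> E then 1 else (0::nat))"
    proof (rule sum.cong[OF refl])
      fix u assume u: "u \<in> ?S1"
      have "{w. (u,w) \<in> E} = {w\<in>?S0. (u,w) \<in> E}" using Sout[OF u] by auto
      thus "outdeg E u = (\<Sum>w\<in>?S0. if (u,w) \<in> E then 1 else (0::nat))"
        unfolding outdeg_def using card_filter_sum[OF Sfin] by metis
    qed
    also have "\<dots> = (\<Sum>w\<in>?S0. \<Sum>u\<in>?S1. if (u,w) \<in> E then 1 else (0::nat))"
      by (rule sum.swap)
    also have "\<dots> = (\<Sum>w\<in>?S0. card {u\<in>?S1. (u,w) \<in> E})"
      using card_filter_sum[OF Sfin] by simp
    also have "\<dots> \<le> (\<Sum>w\<in>?S0. card (N w - A))"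
    proof (rule sum_mono)
      fix w assume "w \<in> ?S0"
      have "{u\<in>?S1. (u,w) \<in> E} \<subseteq> N w - A" using SA N_def by auto
      thus "card {u\<in>?S1. (u,w) \<in> E} \<le> card (N w - A)" using Nfin by (intro card_mono) auto
    qed
    finally have "real (d * card ?S1) \<le> real (\<Sum>w\<in>?S0. card (N w - A))" by linarith
    also have "\<dots> = (\<Sum>w\<in>?S0. real (card (N w - A)))" by simp
    also have "\<dots> \<le> (\<Sum>w\<in>?S0. \<theta>)" using small by (intro sum_mono) (simp add: less_imp_le)
    also have "\<dots> = real (card ?S0) * \<theta>" by simp
    finally show ?thesis by simp
  qed
  have large: "real (card (S (Suc k))) \<ge> real d" if ne: "S (Suc (Suc k)) \<noteq> {}" for k
  proof -
    obtain u where u: "u \<in> S (Suc (Suc k))" using ne by blast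
    have "{w. (u,w) \<in> E} \<subseteq> S (Suc k)" using Sout[OF u] by auto
    hence "outdeg E u \<le> card (S (Suc k))" unfolding outdeg_def using Sfin by (intro card_mono) auto
    moreover have "outdeg E u \<ge> d" using u SV deg by blast
    ultimately show ?thesis by simp
  qed
  have decr: "real (card (S (Suc k))) \<le> real (card (S k)) - \<alpha> * real n" if "S (Suc (Suc k)) \<noteq> {}" for k
  proof -
    define x where "x = real (card (S k))"
    define y where "y = real (card (S (Suc k)))"
    have c: "real d * y \<le> x * (real d - \<alpha> * real n)" using count[of k] by (simp add: x_def y_def \<theta>_def)
    have yd: "y \<ge> real d" using large[OF that] y_def by simp
    have xy: "x \<ge> y" unfolding x_def y_def using Ssub[of k] Sfin by (simp add: card_mono)
    have an: "\<alpha> * real n \<ge> 0" using a by simp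
    have "x * (\<alpha> * real n) \<ge> real d * (\<alpha> * real n)" using xy yd an by (intro mult_right_mono) auto
    hence "real d * (x - y) \<ge> real d * (\<alpha> * real n)" using c by (simp add: algebra_simps)
    moreover have "real d > 0" using dpos an by linarith
    ultimately have "x - y \<ge> \<alpha> * real n" by simp
    thus ?thesis by (simp add: x_def y_def)
  qed
  have ind: "S (Suc (Suc k)) \<noteq> {} \<longrightarrow> real (card (S (Suc k))) \<le> real n - real (Suc k) * (\<alpha> * real n)" for k
  proof (induction k)
    case 0
    have "card (S 0) \<le> n" using SV fin n_def by (simp add: card_mono)
    hence c0: "real (card (S 0)) \<le> real n" by simp
    show ?case
    proof
      assume "S (Suc (Suc 0)) \<noteq> {}"
      hence "real (card (S (Suc 0))) \<le> real (card (S 0)) - \<alpha> * real n" by (rule decr)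
      thus "real (card (S (Suc 0))) \<le> real n - real (Suc 0) * (\<alpha> * real n)" using c0 by simp
    qed
  next
    case (Suc k)
    show ?case
    proof
      assume ne: "S (Suc (Suc (Suc k))) \<noteq> {}"
      hence "S (Suc (Suc k)) \<noteq> {}" using Ssub by blast
      hence "real (card (S (Suc k))) \<le> real n - real (Suc k) * (\<alpha> * real n)" using Suc by blast
      moreover have "real (card (S (Suc (Suc k)))) \<le> real (card (S (Suc k))) - \<alpha> * real n"
        using decr ne by blast
      ultimately show "real (card (S (Suc (Suc k)))) \<le> real n - real (Suc (Suc k)) * (\<alpha> * real n)"
        by (simp add: algebra_simps)
    qed
  qed
  have Kpos: "K > 0" using K by (cases K) auto
  have Sempty: "S (Suc K) = {}"
  proof (rule ccontr)
    assume ne: "S (Suc K) \<noteq> {}"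
    obtain k where k: "K = Suc k" using Kpos by (cases K) auto
    have "real (card (S K)) \<le> real n - real K * (\<alpha> * real n)" using ind[of k] ne k by simp
    moreover have "real K * (\<alpha> * real n) > real n"
    proof -
      have "real K * \<alpha> * real n > 1 * real n" using K npos by (intro mult_strict_right_mono) auto
      thus ?thesis by (simp add: mult.assoc)
    qed
    ultimately show False by simp
  qed
  have reachA: "\<exists>a\<in>A. reach V E (Suc K) u a" if "u \<in> V" for u
    using Sempty that by (auto simp: S_def)
  define f where "f u = (if u \<in> A then g u else g (SOME a. a \<in> A \<and> reach V E (Suc K) u a))" for u
  have gV: "g a \<in> V" "reach V E 1 a (g a)" if "a \<in> A" for a
  proof -
    show "g a \<in> V" using Ag[OF that] EV by auto
    have "a \<in> V" using that AV by auto
    thus "reach V E 1 a (g a)" using Ag[OF that] \<open>g a \<in> V\<close> by (auto intro: reach.rs reach.r0)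
  qed
  have fA: "\<forall>u\<in>V. \<exists>a\<in>A. f u = g a \<and> f u \<in> V \<and> reach V E (K+2) u (f u)"
  proof
    fix u assume u: "u \<in> V"
    show "\<exists>a\<in>A. f u = g a \<and> f u \<in> V \<and> reach V E (K+2) u (f u)"
    proof (cases "u \<in> A")
      case True
      thus ?thesis using gV[OF True] reach_mono[of V E 1 u "g u" "K+2"] by (auto simp: f_def)
    next
      case False
      define a where "a = (SOME a. a \<in> A \<and> reach V E (Suc K) u a)"
      have ex: "\<exists>a. a \<in> A \<and> reach V E (Suc K) u a" using reachA[OF u] by blast
      have aA: "a \<in> A \<and> reach V E (Suc K) u a" unfolding a_def by (rule someI_ex[OF ex])
      have r: "reach V E (Suc K + 1) u (g a)" using reach_trans[OF conjunct2[OF aA] gV(2)[OF conjunct1[OF aA]]] .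
      have fu: "f u = g a" using False by (simp add: f_def a_def)
      show ?thesis using fu r gV(1)[OF conjunct1[OF aA]] aA by auto
    qed
  qed
  show ?thesis
  proof (intro exI[of _ f] conjI ballI)
    fix u assume "u \<in> V" thus "f u \<in> V" "reach V E (K+2) u (f u)" using fA by blast+
  next
    fix w assume "w \<in> f ` V"
    then obtain u where u: "u \<in> V" "w = f u" by blast
    then obtain a where "a \<in> A" "w = g a" using fA by metis
    have "{a'\<in>A. g a' = w} \<subseteq> {u\<in>V. f u = w}" using AV by (auto simp: f_def)
    hence "card {a'\<in>A. g a' = w} \<le> card {u\<in>V. f u = w}" using fin by (intro card_mono) auto
    moreover have "real (card {a'\<in>A. g a' = w}) \<ge> \<theta>" using Afib \<open>a\<in>A\<close> \<open>w = g a\<close> by auto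
    ultimately show "real (card {u\<in>V. f u = w}) \<ge> real (min_outdeg V E) - \<alpha> * real (card V)"
      unfolding \<theta>_def d_def n_def by linarith
  qed
qed

theorem lemma4p2:
  fixes \<alpha> :: real
  assumes "\<alpha> > 0"
  shows "\<exists>l0::nat. \<forall>l\<ge>l0. \<forall>(V::nat set) E. digraph V E \<longrightarrow>
           (\<exists>(t::nat) (v::nat \<Rightarrow> nat) (Vs::nat \<Rightarrow> nat set).
              (\<forall>j<t. v j \<in> V) \<and>
              (\<forall>j<t. \<forall>u\<in>Vs j. has_dpath_le V E l u (v j)) \<and>
              (\<forall>j<t. Vs j \<noteq> {} \<and> Vs j \<subseteq> V) \<and>
              (\<forall>i<t. \<forall>j<t. i \<noteq> j \<longrightarrow> Vs i \<inter> Vs j = {}) \<and>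
              (\<Union>j<t. Vs j) = V \<and>
              (\<forall>j<t. real (card (Vs j)) \<ge> real (min_outdeg V E) - \<alpha> * real (card V)))"
proof -
  define K where "K = nat \<lceil>1/\<alpha>\<rceil> + 1"
  have K: "real K * \<alpha> > 1"
  proof -
    have "real K \<ge> 1/\<alpha> + 1" unfolding K_def by linarith
    hence "real K * \<alpha> \<ge> (1/\<alpha> + 1) * \<alpha>" using assms by (intro mult_right_mono) auto
    also have "(1/\<alpha> + 1) * \<alpha> = 1 + \<alpha>" using assms by (simp add: field_simps)
    finally show ?thesis using assms by linarith
  qed
  show ?thesis
  proof (rule exI[of _ "K+2"], intro allI impI)
    fix l :: nat and V :: "nat set" and E
    assume l: "K + 2 \<le> l" and dg: "digraph V E"
    have fin: "finite V" using dg by (simp add: digraph_def)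
    let ?\<theta> = "real (min_outdeg V E) - \<alpha> * real (card V)"
    have "\<exists>f. (\<forall>u\<in>V. f u \<in> V \<and> reach V E l u (f u)) \<and>
             (\<forall>w\<in>f`V. real (card {u\<in>V. f u = w}) \<ge> ?\<theta>)"
    proof (cases "V \<noteq> {} \<and> ?\<theta> > 0")
      case True
      hence Vne: "V \<noteq> {}" and tp: "?\<theta> > 0" by auto
      obtain f where f: "\<forall>u\<in>V. f u \<in> V \<and> reach V E (K+2) u (f u)"
        "\<forall>w\<in>f`V. real (card {u\<in>V. f u = w}) \<ge> ?\<theta>"
        using main_case[OF dg assms Vne tp K] by (elim exE conjE) 
      have "\<forall>u\<in>V. f u \<in> V \<and> reach V E l u (f u)"
      proof
        fix u assume "u \<in> V"
        hence fu: "f u \<in> V" "reach V E (K+2) u (f u)" using f(1) by auto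
        have "reach V E l u (f u)" using reach_mono[OF fu(2) l] .
        thus "f u \<in> V \<and> reach V E l u (f u)" using fu(1) by blast
      qed
      thus ?thesis using f(2) by blast
    next
      case False
      show ?thesis
      proof (cases "V = {}")
        case True thus ?thesis by auto
      next
        case False
        hence le: "?\<theta> \<le> 0" using \<open>\<not> (V \<noteq> {} \<and> ?\<theta> > 0)\<close> by auto
        show ?thesis
        proof (rule exI[of _ id], intro conjI ballI)
          fix u assume "u \<in> V" thus "id u \<in> V" "reach V E l u (id u)" by (auto intro: reach.r0)
        next
          fix w assume "w \<in> id ` V"
          show "real (card {u\<in>V. id u = w}) \<ge> ?\<theta>" using le by linarith
        qed
      qed
    qed
    then obtain f where "\<forall>u\<in>V. f u \<in> V \<and> reach V E l u (f u)"
        "\<forall>w\<in>f`V. real (card {u\<in>V. f u = w}) \<ge> ?\<theta>" by blast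
    from partition_from_f[OF this fin] show "\<exists>(t::nat) (v::nat \<Rightarrow> nat) (Vs::nat \<Rightarrow> nat set).
              (\<forall>j<t. v j \<in> V) \<and>
              (\<forall>j<t. \<forall>u\<in>Vs j. has_dpath_le V E l u (v j)) \<and>
              (\<forall>j<t. Vs j \<noteq> {} \<and> Vs j \<subseteq> V) \<and>
              (\<forall>i<t. \<forall>j<t. i \<noteq> j \<longrightarrow> Vs i \<inter> Vs j = {}) \<and>
              (\<Union>j<t. Vs j) = V \<and>
              (\<forall>j<t. real (card (Vs j)) \<ge> ?\<theta>)" .
  qed
qed

end
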